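(* Let $p>q>0$ be coprime integers and represent the lens space $L_{p,q}$ as the union of two solid tori glued along their common boundary torus $T$. Fix any basis of $\pi_1(T)=H_1(T;\mathbb Z)=\mathbb Z^2$, and let $r_1,r_2\in\mathbb Q\cup\{\infty\}$ be the slopes of the meridians $\mu_1,\mu_2$ of the two solid tori. Then $d_c(r_1,r_2)=E(p,q)-1$.
   Context: The slope of a primitive class $(m,n)\in\mathbb Z^2$ is $m/n\in\mathbb Q\cup\{\infty\}$. Hyperbolic plane is the upper half-plane with absolute $\mathbb R\cup\{\infty\}$; the Farey tesselation consists of the geodesics joining $m/n$ and $m'/n'$ ($\infty=1/0$) with $|mn'-nm'|=1$. For distinct rational (or infinite) absolute points $r_1,r_2$, $d_c(r_1,r_2)$ is the number of Farey lines intersecting the geodesic from $r_1$ to $r_2$ (lines merely sharing an ideal endpoint do not count). For coprime positive integers $p,q$, $E(p,q)$ is the number of subtractions in the subtractive Euclid algorithm converting $(p,q)$ into $(0,1)$, i.e. the sum of the partial quotients of the continued fraction of $p/q$. *)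

theory Defs
  imports Complex_Main
begin

text \<open>Points of the absolute that we use: \<open>\<rat> \<union> {\<infinity>}\<close>, encoded as \<open>rat option\<close>
  with \<open>None\<close> standing for \<open>\<infinity> = 1/0\<close>.\<close>

definition slope :: "int \<times> int \<Rightarrow> rat option" where
  "slope v = (if snd v = 0 then None else Some (of_int (fst v) / of_int (snd v)))"

fun geodesic :: "rat option \<Rightarrow> rat option \<Rightarrow> complex set" where
  "geodesic (Some a) (Some b) =
     {z. Im z > 0 \<and> cmod (z - complex_of_real ((real_of_rat a + real_of_rat b) / 2))
                      = \<bar>real_of_rat b - real_of_rat a\<bar> / 2}"
| "geodesic (Some a) None = {z. Im z > 0 \<and> Re z = real_of_rat a}"
| "geodesic None (Some b) = {z. Im z > 0 \<and> Re z = real_of_rat b}"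
| "geodesic None None = {}"

definition farey_lines :: "rat option set set" where
  "farey_lines = {{slope (m, n), slope (m', n')} | m n m' n' :: int. \<bar>m * n' - n * m'\<bar> = 1}"

text \<open>\<open>d_c r1 r2\<close>: number of Farey lines meeting the geodesic from \<open>r1\<close> to \<open>r2\<close>
  (a line sharing only an ideal endpoint does not meet it in the hyperbolic plane;
  the line \<open>{r1,r2}\<close> itself is not counted).\<close>
definition d_c :: "rat option \<Rightarrow> rat option \<Rightarrow> nat" where
  "d_c r1 r2 = card {L \<in> farey_lines. L \<noteq> {r1, r2} \<and>
       (\<exists>x y. L = {x, y} \<and> geodesic x y \<inter> geodesic r1 r2 \<noteq> {})}"

fun euclid_sub :: "nat \<Rightarrow> nat \<Rightarrow> nat" where
  "euclid_sub p q =
     (if p = 0 \<or> q = 0 then 0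
      else if q \<le> p then Suc (euclid_sub (p - q) q)
      else Suc (euclid_sub p (q - p)))"

end

theory Submission
  imports Defs
begin


lemma sqrt_half_abs: "(s::real) \<ge> 0 \<Longrightarrow> sqrt s = \<bar>w\<bar> / 2 \<longleftrightarrow> s = w^2/4"
proof
  assume "s \<ge> 0" "sqrt s = \<bar>w\<bar> / 2"
  have "s = (sqrt s)^2" using \<open>s \<ge> 0\<close> by simp
  also have "\<dots> = (\<bar>w\<bar>/2)^2" using \<open>sqrt s = \<bar>w\<bar> / 2\<close> by (simp only:)
  also have "\<dots> = w^2/4" by (simp add: power_divide)
  finally show "s = w^2/4" .
next
  assume "s \<ge> 0" "s = w^2/4"
  then have "sqrt s = sqrt ((\<bar>w\<bar>/2)^2)" by (simp add: power_divide)
  also have "\<dots> = \<bar>w\<bar>/2" by simp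
  finally show "sqrt s = \<bar>w\<bar> / 2" .
qed

lemma geo_SS: "z \<in> geodesic (Some a) (Some b) \<longleftrightarrow>
   Im z > 0 \<and> (Re z - real_of_rat a) * (Re z - real_of_rat b) + (Im z)^2 = 0"
proof -
  define x where "x = real_of_rat a"
  define y where "y = real_of_rat b"
  have m: "z \<in> geodesic (Some a) (Some b) \<longleftrightarrow> Im z > 0 \<and> cmod (z - complex_of_real ((x + y) / 2)) = \<bar>y - x\<bar> / 2"
    by (simp only: geodesic.simps mem_Collect_eq x_def y_def)
  have E1: "cmod (z - complex_of_real ((x + y) / 2)) = sqrt ((Re z - (x+y)/2)^2 + (Im z)^2)"
    by (simp add: cmod_def)
  have E2: "sqrt ((Re z - (x+y)/2)^2 + (Im z)^2) = \<bar>y - x\<bar> / 2 \<longleftrightarrow>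
      (Re z - (x+y)/2)^2 + (Im z)^2 = (y-x)^2/4"
    by (rule sqrt_half_abs) simp
  have E3': "(Re z - (x+y)/2)^2 + (Im z)^2 - (y-x)^2/4 = (Re z - x) * (Re z - y) + (Im z)^2"
    by (simp add: power2_eq_square field_simps)
  have E3: "(Re z - (x+y)/2)^2 + (Im z)^2 = (y-x)^2/4 \<longleftrightarrow> (Re z - x) * (Re z - y) + (Im z)^2 = 0"
    using E3' by linarith
  show ?thesis using m E1 E2 E3 by (simp only: x_def y_def)
qed

lemma geo_SN: "z \<in> geodesic (Some a) None \<longleftrightarrow> Im z > 0 \<and> Re z = real_of_rat a" by simp
lemma geo_NS: "z \<in> geodesic None (Some a) \<longleftrightarrow> Im z > 0 \<and> Re z = real_of_rat a" by simp

lemma quad_id: "((u-x)*(v-x)/D)*((u-y)*(v-y)/D) = ((x-u)*(y-v)*(x-v)*(y-u)) / (D::real)^2"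
proof -
  have "((u-x)*(v-x)/D)*((u-y)*(v-y)/D) = ((u-x)*(v-x)*((u-y)*(v-y)))/(D^2)"
    by (simp add: power2_eq_square)
  moreover have "(u-x)*(v-x)*((u-y)*(v-y)) = (x-u)*(y-v)*(x-v)*(y-u)" by (simp add: algebra_simps)
  ultimately show ?thesis by simp
qed

lemma CC_real:
  fixes x y u v :: real
  assumes "x \<noteq> y" "u \<noteq> v"
  shows "(\<exists>X. (X-x)*(X-y) < 0 \<and> (X-x)*(X-y) = (X-u)*(X-v)) \<longleftrightarrow>
         ({x,y} = {u,v} \<or> (x-u)*(y-v)*(x-v)*(y-u) < 0)"
proof
  assume "\<exists>X. (X-x)*(X-y) < 0 \<and> (X-x)*(X-y) = (X-u)*(X-v)"
  then obtain X where X1: "(X-x)*(X-y) < 0" and X2: "(X-x)*(X-y) = (X-u)*(X-v)" by blast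
  have lin: "X * (u+v-x-y) = u*v - x*y" using X2 by (simp add: algebra_simps)
  show "{x,y} = {u,v} \<or> (x-u)*(y-v)*(x-v)*(y-u) < 0"
  proof (cases "u+v-x-y = 0")
    case True
    then have "u*v = x*y" using lin by simp
    moreover have "v = x + y - u" using True by simp
    ultimately have "(u - x) * (u - y) = 0" by (simp add: algebra_simps)
    then have "u = x \<or> u = y" by simp
    then show ?thesis using \<open>v = x + y - u\<close> by auto
  next
    case False
    define D where "D = u+v-x-y"
    have XD0: "X * D = u*v - x*y" using lin unfolding D_def .
    have Dnz: "D \<noteq> 0" using False unfolding D_def by simp
    have XD: "X = (u*v - x*y)/D" using XD0 Dnz by (simp add: field_simps)
    have e1: "X - x = (u-x)*(v-x)/D" using False unfolding XD D_def by (simp add: field_simps) (simp add: algebra_simps)?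
    have e2: "X - y = (u-y)*(v-y)/D" using False unfolding XD D_def by (simp add: field_simps) (simp add: algebra_simps)?
    have "(X-x)*(X-y) = ((x-u)*(y-v)*(x-v)*(y-u)) / D^2"
      unfolding e1 e2 by (rule quad_id)
    with X1 have "((x-u)*(y-v)*(x-v)*(y-u)) / D^2 < 0" by simp
    then show ?thesis by (simp add: divide_less_0_iff)
  qed
next
  assume H: "{x,y} = {u,v} \<or> (x-u)*(y-v)*(x-v)*(y-u) < 0"
  show "\<exists>X. (X-x)*(X-y) < 0 \<and> (X-x)*(X-y) = (X-u)*(X-v)"
  proof (cases "{x,y} = {u,v}")
    case True
    have "(u = x \<and> v = y) \<or> (u = y \<and> v = x)" using True by (metis doubleton_eq_iff)
    moreover have "((x+y)/2 - x) * ((x+y)/2 - y) < 0"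
    proof -
      have "((x+y)/2 - x) * ((x+y)/2 - y) = - (((y-x)/2)^2)" by (simp add: power2_eq_square field_simps)
      moreover have "((y-x)/2)^2 > 0" using assms by simp
      ultimately show ?thesis by simp
    qed
    ultimately show ?thesis by (metis mult.commute)
  next
    case False
    with H have P: "(x-u)*(y-v)*(x-v)*(y-u) < 0" by simp
    define D where "D = u+v-x-y"
    have Dnz: "D \<noteq> 0"
    proof
      assume "D = 0"
      then have "v = x + y - u" by (simp add: D_def)
      then have h1: "y - v = -(x-u)" and h2: "y - u = -(x-v)" by simp_all
      have "(x-u)*(y-v)*(x-v)*(y-u) = ((x-u)*(x-v))^2"
        unfolding h1 h2 by (simp add: power2_eq_square algebra_simps)
      with P show False by (metis zero_le_power2 not_less)
    qed
    define X where "X = (u*v - x*y)/D"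
    have e1: "X - x = (u-x)*(v-x)/D" using Dnz unfolding X_def D_def by (simp add: field_simps) (simp add: algebra_simps)?
    have e2: "X - y = (u-y)*(v-y)/D" using Dnz unfolding X_def D_def by (simp add: field_simps) (simp add: algebra_simps)?
    have "(X-x)*(X-y) = ((x-u)*(y-v)*(x-v)*(y-u)) / D^2"
      unfolding e1 e2 by (rule quad_id)
    then have "(X-x)*(X-y) < 0" using P Dnz by (simp add: divide_less_0_iff)
    moreover have "(X-x)*(X-y) = (X-u)*(X-v)"
    proof -
      have "X * D = u*v - x*y" using Dnz X_def by simp
      then show ?thesis unfolding D_def by (simp add: algebra_simps)
    qed
    ultimately show ?thesis by blast
  qed
qed


lemma VV_real: "(\<exists>z::complex. Im z > 0 \<and> Re z = a \<and> Re z = b) \<longleftrightarrow> a = b"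
proof
  assume "a = b" then show "\<exists>z::complex. Im z > 0 \<and> Re z = a \<and> Re z = b"
    by (intro exI[of _ "Complex a 1"]) simp
qed auto

lemma VC_real: "(\<exists>z::complex. Im z > 0 \<and> Re z = a \<and> (Re z - s) * (Re z - t) + (Im z)^2 = 0)
   \<longleftrightarrow> (a - s) * (a - t) < 0"
proof
  assume "\<exists>z::complex. Im z > 0 \<and> Re z = a \<and> (Re z - s) * (Re z - t) + (Im z)^2 = 0"
  then obtain z :: complex where "Im z > 0" "Re z = a" "(Re z - s) * (Re z - t) + (Im z)^2 = 0" by blast
  moreover have "(Im z)^2 > 0" using \<open>Im z > 0\<close> by simp
  ultimately show "(a - s) * (a - t) < 0" by (metis add_less_same_cancel2 less_add_same_cancel2)
next
  assume H: "(a - s) * (a - t) < 0"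
  define Y where "Y = sqrt (- ((a - s) * (a - t)))"
  have "Y > 0" using H by (simp add: Y_def)
  moreover have "Y^2 = - ((a - s) * (a - t))" using H by (simp add: Y_def)
  ultimately show "\<exists>z::complex. Im z > 0 \<and> Re z = a \<and> (Re z - s) * (Re z - t) + (Im z)^2 = 0"
    by (intro exI[of _ "Complex a Y"]) simp
qed

lemma CC_real2:
  fixes x y u v :: real
  shows "(\<exists>z::complex. Im z > 0 \<and> (Re z - x) * (Re z - y) + (Im z)^2 = 0 \<and> (Re z - u) * (Re z - v) + (Im z)^2 = 0)
   \<longleftrightarrow> (\<exists>X. (X-x)*(X-y) < 0 \<and> (X-x)*(X-y) = (X-u)*(X-v))"
proof
  assume "\<exists>z::complex. Im z > 0 \<and> (Re z - x) * (Re z - y) + (Im z)^2 = 0 \<and> (Re z - u) * (Re z - v) + (Im z)^2 = 0"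
  then obtain z :: complex where "Im z > 0" "(Re z - x) * (Re z - y) + (Im z)^2 = 0" "(Re z - u) * (Re z - v) + (Im z)^2 = 0" by blast
  moreover have "(Im z)^2 > 0" using \<open>Im z > 0\<close> by simp
  ultimately show "\<exists>X. (X-x)*(X-y) < 0 \<and> (X-x)*(X-y) = (X-u)*(X-v)"
    by (intro exI[of _ "Re z"]) linarith
next
  assume "\<exists>X. (X-x)*(X-y) < 0 \<and> (X-x)*(X-y) = (X-u)*(X-v)"
  then obtain X where H: "(X-x)*(X-y) < 0" "(X-x)*(X-y) = (X-u)*(X-v)" by blast
  define Y where "Y = sqrt (- ((X-x)*(X-y)))"
  have "Y > 0" using H by (simp add: Y_def)
  moreover have "Y^2 = - ((X-x)*(X-y))" using H by (simp add: Y_def)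
  ultimately show "\<exists>z::complex. Im z > 0 \<and> (Re z - x) * (Re z - y) + (Im z)^2 = 0 \<and> (Re z - u) * (Re z - v) + (Im z)^2 = 0"
    using H by (intro exI[of _ "Complex X Y"]) simp
qed

definition dd :: "rat option \<Rightarrow> rat option \<Rightarrow> rat" where
  "dd r s = (case r of None \<Rightarrow> (case s of None \<Rightarrow> 0 | Some y \<Rightarrow> 1)
                     | Some x \<Rightarrow> (case s of None \<Rightarrow> -1 | Some y \<Rightarrow> x - y))"

lemma dd_simps [simp]: "dd None None = 0" "dd None (Some y) = 1" "dd (Some x) None = -1"
  "dd (Some x) (Some y) = x - y"
  by (simp_all add: dd_def)

definition linked :: "rat option \<Rightarrow> rat option \<Rightarrow> rat option \<Rightarrow> rat option \<Rightarrow> bool" where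
  "linked x y u v \<longleftrightarrow> dd x u * dd y v * dd x v * dd y u < 0"

lemma linked_swap1: "linked x y u v = linked y x u v"
  unfolding linked_def by (simp add: mult_ac)

lemma geodesic_swap: "geodesic x y = geodesic y x"
  by (cases x; cases y) (auto simp: abs_minus_commute add.commute)

lemma rr: "real_of_rat ((a - s) * (a - t)) = (real_of_rat a - real_of_rat s) * (real_of_rat a - real_of_rat t)"
  by (simp add: of_rat_mult of_rat_diff)

lemma rr4: "real_of_rat ((a - b) * (c - d) * (e - f) * (g - h)) =
  (real_of_rat a - real_of_rat b) * (real_of_rat c - real_of_rat d) * (real_of_rat e - real_of_rat f) * (real_of_rat g - real_of_rat h)"
  by (simp add: of_rat_mult of_rat_diff)

lemma geo_ne_iff_NS_NS: "geodesic None (Some a) \<inter> geodesic None (Some b) \<noteq> {} \<longleftrightarrow> a = b"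
proof -
  have "geodesic None (Some a) \<inter> geodesic None (Some b) \<noteq> {} \<longleftrightarrow>
     (\<exists>z::complex. Im z > 0 \<and> Re z = real_of_rat a \<and> Re z = real_of_rat b)" by auto
  also have "\<dots> \<longleftrightarrow> a = b" by (simp add: VV_real)
  finally show ?thesis .
qed

lemma geo_ne_iff_NS_SS: "geodesic None (Some a) \<inter> geodesic (Some s) (Some t) \<noteq> {} \<longleftrightarrow> (a - s) * (a - t) < 0"
proof -
  have "geodesic None (Some a) \<inter> geodesic (Some s) (Some t) \<noteq> {} \<longleftrightarrow>
     (\<exists>z::complex. Im z > 0 \<and> Re z = real_of_rat a \<and> (Re z - real_of_rat s) * (Re z - real_of_rat t) + (Im z)^2 = 0)"
  proof -
    have "z \<in> geodesic None (Some a) \<inter> geodesic (Some s) (Some t) \<longleftrightarrow> Im z > 0 \<and> Re z = real_of_rat a \<and> (Re z - real_of_rat s) * (Re z - real_of_rat t) + (Im z)^2 = 0" for z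
      by (simp only: Int_iff geo_SS geo_NS) blast
    then show ?thesis by blast
  qed
  also have "\<dots> \<longleftrightarrow> real_of_rat ((a - s) * (a - t)) < 0" unfolding VC_real rr ..
  finally show ?thesis by simp
qed

lemma geo_ne_iff_SS_SS:
  assumes "a \<noteq> b" "c \<noteq> d"
  shows "geodesic (Some a) (Some b) \<inter> geodesic (Some c) (Some d) \<noteq> {} \<longleftrightarrow>
     ({a,b} = {c,d} \<or> (a - c) * (b - d) * (a - d) * (b - c) < 0)"
proof -
  let ?r = real_of_rat
  have "geodesic (Some a) (Some b) \<inter> geodesic (Some c) (Some d) \<noteq> {} \<longleftrightarrow>
     (\<exists>z::complex. Im z > 0 \<and> (Re z - ?r a) * (Re z - ?r b) + (Im z)^2 = 0 \<and> (Re z - ?r c) * (Re z - ?r d) + (Im z)^2 = 0)"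
  proof -
    have "z \<in> geodesic (Some a) (Some b) \<inter> geodesic (Some c) (Some d) \<longleftrightarrow> Im z > 0 \<and> (Re z - ?r a) * (Re z - ?r b) + (Im z)^2 = 0 \<and> (Re z - ?r c) * (Re z - ?r d) + (Im z)^2 = 0" for z
      by (simp only: Int_iff geo_SS) blast
    then show ?thesis by blast
  qed
  also have "\<dots> \<longleftrightarrow> ({?r a, ?r b} = {?r c, ?r d} \<or> (?r a - ?r c) * (?r b - ?r d) * (?r a - ?r d) * (?r b - ?r c) < 0)"
    unfolding CC_real2 using assms by (intro CC_real) auto
  also have "(?r a - ?r c) * (?r b - ?r d) * (?r a - ?r d) * (?r b - ?r c) = ?r ((a - c) * (b - d) * (a - d) * (b - c))"
    by (simp add: rr4)
  also have "{?r a, ?r b} = {?r c, ?r d} \<longleftrightarrow> {a,b} = {c,d}"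
    by (simp add: doubleton_eq_iff)
  finally show ?thesis by simp
qed

lemma geo_iff:
  assumes "x \<noteq> y" "u \<noteq> v"
  shows "geodesic x y \<inter> geodesic u v \<noteq> {} \<longleftrightarrow> ({x,y} = {u,v} \<or> linked x y u v)"
proof -
  have A: "geodesic None (Some a) \<inter> geodesic None (Some b) \<noteq> {} \<longleftrightarrow> ({None, Some a} = {None, Some b} \<or> linked None (Some a) None (Some b))" for a b
    unfolding geo_ne_iff_NS_NS by (auto simp: linked_def doubleton_eq_iff)
  have B: "geodesic None (Some a) \<inter> geodesic (Some s) (Some t) \<noteq> {} \<longleftrightarrow> ({None, Some a} = {Some s, Some t} \<or> linked None (Some a) (Some s) (Some t))" for a s t
    unfolding geo_ne_iff_NS_SS by (auto simp: linked_def doubleton_eq_iff mult_ac)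
  have B': "geodesic (Some s) (Some t) \<inter> geodesic None (Some a) \<noteq> {} \<longleftrightarrow> ({Some s, Some t} = {None, Some a} \<or> linked (Some s) (Some t) None (Some a))" for a s t
    unfolding Int_commute[of "geodesic (Some s) (Some t)"] geo_ne_iff_NS_SS
  proof -
    have h: "(a - t) * (s - a) = - ((a - s) * (a - t))" by (simp add: algebra_simps)
    show "((a - s) * (a - t) < 0) = ({Some s, Some t} = {None, Some a} \<or> linked (Some s) (Some t) None (Some a))"
      by (auto simp: linked_def doubleton_eq_iff mult_ac h)
  qed
  have C: "a \<noteq> b \<Longrightarrow> c \<noteq> d \<Longrightarrow> geodesic (Some a) (Some b) \<inter> geodesic (Some c) (Some d) \<noteq> {} \<longleftrightarrow> ({Some a, Some b} = {Some c, Some d} \<or> linked (Some a) (Some b) (Some c) (Some d))" for a b c d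
    using geo_ne_iff_SS_SS[of a b c d] by (simp add: linked_def doubleton_eq_iff del: geodesic.simps)
  have sw: "linked x y u v = linked y x u v" "linked x y u v = linked x y v u" for x y u v
    unfolding linked_def by (simp_all add: mult_ac)
  define P where "P x y u v \<longleftrightarrow> (geodesic x y \<inter> geodesic u v \<noteq> {} \<longleftrightarrow> ({x,y} = {u,v} \<or> linked x y u v))" for x y u v
  have P1: "P x y u v \<longleftrightarrow> P y x u v" for x y u v
    unfolding P_def using sw(1)[of x y u v] geodesic_swap[of x y] by (simp add: insert_commute)
  have P2: "P x y u v \<longleftrightarrow> P x y v u" for x y u v
    unfolding P_def using sw(2)[of x y u v] geodesic_swap[of u v] by (simp add: insert_commute)
  define N where "N (x::rat option) y \<longleftrightarrow> (\<exists>a. x = None \<and> y = Some a) \<or> (\<exists>a b. x = Some a \<and> y = Some b \<and> a \<noteq> b)" for x y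
  have NN: "x \<noteq> y \<Longrightarrow> N x y \<or> N y x" for x y :: "rat option"
    unfolding N_def by (cases x; cases y) auto
  have base: "N x y \<Longrightarrow> N u v \<Longrightarrow> P x y u v" for x y u v
  proof -
    have A': "P None (Some a) None (Some b)" for a b unfolding P_def by (rule A)
    have B1: "P None (Some a) (Some s) (Some t)" for a s t unfolding P_def by (rule B)
    have B2: "P (Some s) (Some t) None (Some a)" for a s t unfolding P_def by (rule B')
    have C': "a \<noteq> b \<Longrightarrow> c \<noteq> d \<Longrightarrow> P (Some a) (Some b) (Some c) (Some d)" for a b c d unfolding P_def by (rule C)
    assume "N x y" "N u v"
    then show ?thesis unfolding N_def using A' B1 B2 C' by blast
  qed
  have "P x y u v"
  proof -
    from NN[OF assms(1)] NN[OF assms(2)] show ?thesis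
      using base P1 P2 by metis
  qed
  then show ?thesis unfolding P_def .
qed



definition det2 :: "int \<times> int \<Rightarrow> int \<times> int \<Rightarrow> int" where
  "det2 u v = fst u * snd v - snd u * fst v"

definition rep :: "rat option \<Rightarrow> int \<times> int" where
  "rep r = (case r of None \<Rightarrow> (1,0) | Some x \<Rightarrow> quotient_of x)"

definition wt :: "rat option \<Rightarrow> rat" where
  "wt r = (case r of None \<Rightarrow> 1 | Some x \<Rightarrow> of_int (snd (quotient_of x)))"

lemma wt_pos: "wt r > 0"
  by (cases r) (simp_all add: wt_def quotient_of_denom_pos')

lemma rep_None [simp]: "rep None = (1,0)" by (simp add: rep_def)
lemma rep_Some [simp]: "rep (Some x) = quotient_of x" by (simp add: rep_def)

lemma slope_rep [simp]: "slope (rep r) = r"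
proof (cases r)
  case None then show ?thesis by (simp add: slope_def)
next
  case (Some x)
  obtain M N where q: "quotient_of x = (M,N)" by force
  have "N > 0" using quotient_of_denom_pos[OF q] .
  moreover have "x = of_int M / of_int N" using quotient_of_div[OF q] .
  ultimately show ?thesis using Some q by (simp add: slope_def)
qed

lemma rep_nz: "rep r \<noteq> (0,0)"
  by (cases r) (auto simp: quotient_of_denom_pos' dest: quotient_of_denom_pos)

lemma dt_dd: "(of_int (det2 (rep r) (rep s)) :: rat) = wt r * wt s * dd r s"
proof (cases r; cases s)
  fix x y assume r: "r = Some x" and s: "s = Some y"
  obtain M N where q: "quotient_of x = (M,N)" by force
  obtain M' N' where q': "quotient_of y = (M',N')" by force
  have "N > 0" "N' > 0" using quotient_of_denom_pos[OF q] quotient_of_denom_pos[OF q'] by auto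
  moreover have "x = of_int M / of_int N" "y = of_int M' / of_int N'"
    using quotient_of_div[OF q] quotient_of_div[OF q'] by auto
  ultimately show ?thesis using r s q q' by (simp add: det2_def wt_def field_simps)
qed (auto simp: det2_def wt_def quotient_of_denom_pos' split: prod.splits)

lemma prod4_sign:
  fixes a b c d :: rat
  assumes "a > 0" "b > 0" "c > 0" "d > 0"
  shows "(a*c*(b*d)*(a*d)*(b*c)) * P < 0 \<longleftrightarrow> P < 0"
proof -
  have Q: "a*c*(b*d)*(a*d)*(b*c) > 0" using assms by simp
  show ?thesis using mult_less_cancel_left_pos[OF Q, of P 0] by simp
qed

lemma linked_det: "linked x y u v \<longleftrightarrow>
  det2 (rep x) (rep u) * det2 (rep y) (rep v) * det2 (rep x) (rep v) * det2 (rep y) (rep u) < 0"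
proof -
  have "(of_int (det2 (rep x) (rep u) * det2 (rep y) (rep v) * det2 (rep x) (rep v) * det2 (rep y) (rep u)) :: rat)
     = (wt x * wt u * (wt y * wt v) * (wt x * wt v) * (wt y * wt u)) * (dd x u * dd y v * dd x v * dd y u)"
    by (simp add: dt_dd mult_ac)
  moreover have "(wt x * wt u * (wt y * wt v) * (wt x * wt v) * (wt y * wt u)) * (dd x u * dd y v * dd x v * dd y u) < 0
     \<longleftrightarrow> dd x u * dd y v * dd x v * dd y u < 0"
    by (rule prod4_sign) (simp_all add: wt_pos)
  ultimately show ?thesis unfolding linked_def
    by (metis of_int_less_0_iff)
qed

lemma rep_slope:
  assumes "v \<noteq> (0,0)"
  shows "\<exists>l::rat. l \<noteq> 0 \<and> of_int (fst v) = l * of_int (fst (rep (slope v)))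
                        \<and> of_int (snd v) = l * of_int (snd (rep (slope v)))"
proof -
  obtain m n where v: "v = (m,n)" by force
  show ?thesis
  proof (cases "n = 0")
    case True
    then have "m \<noteq> 0" using assms v by simp
    then show ?thesis using True v by (intro exI[of _ "of_int m"]) (simp add: slope_def)
  next
    case False
    obtain M N where q: "quotient_of (of_int m / of_int n) = (M,N)" by force
    have "N > 0" using quotient_of_denom_pos[OF q] .
    have e: "of_int m / of_int n = (of_int M / of_int N :: rat)" using quotient_of_div[OF q] .
    then have e2: "of_int m * of_int N = (of_int M * of_int n :: rat)" using False \<open>N > 0\<close>
      by (simp add: field_simps)
    show ?thesis using False v q \<open>N > 0\<close>
      apply (intro exI[of _ "of_int n / of_int N"])
      apply (simp add: slope_def)
      using e2 by (simp add: field_simps)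
  qed
qed

lemma det2_scale:
  assumes "(of_int (fst v) :: rat) = l * of_int (fst v')" "(of_int (snd v) :: rat) = l * of_int (snd v')"
    and "(of_int (fst w) :: rat) = k * of_int (fst w')" "(of_int (snd w) :: rat) = k * of_int (snd w')"
  shows "(of_int (det2 v w) :: rat) = l * k * of_int (det2 v' w')"
  using assms by (simp add: det2_def algebra_simps)

lemma slope_eq:
  assumes "u \<noteq> (0,0)" "v \<noteq> (0,0)" "det2 u v = 0"
  shows "slope u = slope v"
proof -
  obtain m n where u: "u = (m,n)" by force
  obtain m' n' where v: "v = (m',n')" by force
  have d: "m * n' = n * m'" using assms(3) u v by (simp add: det2_def)
  show ?thesis
  proof (cases "n = 0")
    case True
    then have "m \<noteq> 0" using assms u by simp
    then have "n' = 0" using d True by simp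
    then show ?thesis using True u v by (simp add: slope_def)
  next
    case False
    show ?thesis
    proof (cases "n' = 0")
      case True
      then have "m' \<noteq> 0" using assms v by simp
      then show ?thesis using d True False by simp
    next
      case False2: False
      have "(of_int m :: rat) * of_int n' = of_int n * of_int m'" using d by (metis of_int_mult)
      then have "(of_int m :: rat) / of_int n = of_int m' / of_int n'" using False False2
        by (simp add: field_simps)
      then show ?thesis using False False2 u v by (simp add: slope_def)
    qed
  qed
qed

lemma slope_neq:
  assumes "u \<noteq> (0,0)" "v \<noteq> (0,0)" "det2 u v \<noteq> 0"
  shows "slope u \<noteq> slope v"
proof
  assume eq: "slope u = slope v"
  obtain l where l: "l \<noteq> 0" "(of_int (fst u) :: rat) = l * of_int (fst (rep (slope u)))"
      "(of_int (snd u) :: rat) = l * of_int (snd (rep (slope u)))" using rep_slope[OF assms(1)] by blast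
  obtain k where k: "k \<noteq> 0" "(of_int (fst v) :: rat) = k * of_int (fst (rep (slope v)))"
      "(of_int (snd v) :: rat) = k * of_int (snd (rep (slope v)))" using rep_slope[OF assms(2)] by blast
  have "(of_int (det2 u v) :: rat) = l * k * of_int (det2 (rep (slope u)) (rep (slope v)))"
    by (rule det2_scale) (use l k in auto)
  also have "det2 (rep (slope u)) (rep (slope v)) = 0" using eq by (simp add: det2_def)
  finally show False using assms(3) by simp
qed



type_synonym mat = "int \<times> int \<times> int \<times> int"

definition mv :: "mat \<Rightarrow> int \<times> int \<Rightarrow> int \<times> int" where
  "mv A v = (case A of (a,b,c,d) \<Rightarrow> (a * fst v + c * snd v, b * fst v + d * snd v))"

definition detm :: "mat \<Rightarrow> int" where
  "detm A = (case A of (a,b,c,d) \<Rightarrow> a * d - b * c)"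

definition invm :: "mat \<Rightarrow> mat" where
  "invm A = (case A of (a,b,c,d) \<Rightarrow> (detm A * d, - detm A * b, - detm A * c, detm A * a))"

definition act :: "mat \<Rightarrow> rat option \<Rightarrow> rat option" where
  "act A r = slope (mv A (rep r))"

lemma det2_mv: "det2 (mv A u) (mv A v) = detm A * det2 u v"
  by (cases A) (simp add: mv_def detm_def det2_def algebra_simps)

lemma mv_nz: "detm A \<noteq> 0 \<Longrightarrow> v \<noteq> (0,0) \<Longrightarrow> mv A v \<noteq> (0,0)"
proof
  assume "detm A \<noteq> 0" "v \<noteq> (0,0)" "mv A v = (0,0)"
  obtain a b c d where A: "A = (a,b,c,d)" by (cases A) auto
  obtain m n where v: "v = (m,n)" by force
  have e1: "a*m + c*n = 0" and e2: "b*m + d*n = 0" using \<open>mv A v = (0,0)\<close> A v by (simp_all add: mv_def)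
  have "(a*d - b*c) * m = d*(a*m + c*n) - c*(b*m + d*n)" by (simp add: algebra_simps)
  then have "(a*d - b*c) * m = 0" using e1 e2 by simp
  moreover have "(a*d - b*c) * n = a*(b*m + d*n) - b*(a*m + c*n)" by (simp add: algebra_simps)
  then have "(a*d - b*c) * n = 0" using e1 e2 by simp
  moreover have "a*d - b*c \<noteq> 0" using \<open>detm A \<noteq> 0\<close> A by (simp add: detm_def)
  ultimately have "m = 0" "n = 0" by simp_all
  then show False using \<open>v \<noteq> (0,0)\<close> v by simp
qed

lemma det2_rep_slope: "v \<noteq> (0,0) \<Longrightarrow> det2 (rep (slope v)) v = 0"
proof -
  assume v: "v \<noteq> (0,0)"
  obtain l where l: "l \<noteq> 0" "(of_int (fst v) :: rat) = l * of_int (fst (rep (slope v)))"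
      "(of_int (snd v) :: rat) = l * of_int (snd (rep (slope v)))" using rep_slope[OF v] by blast
  have "(of_int (det2 (rep (slope v)) v) :: rat) = 1 * l * of_int (det2 (rep (slope v)) (rep (slope v)))"
    by (rule det2_scale[OF _ _ l(2) l(3)]) simp_all
  also have "det2 (rep (slope v)) (rep (slope v)) = 0" by (simp add: det2_def)
  finally show ?thesis by simp
qed

lemma act_slope:
  assumes "detm A \<noteq> 0" "v \<noteq> (0,0)"
  shows "act A (slope v) = slope (mv A v)"
  unfolding act_def
proof (rule slope_eq)
  show "mv A (rep (slope v)) \<noteq> (0,0)" by (rule mv_nz[OF assms(1) rep_nz])
  show "mv A v \<noteq> (0,0)" by (rule mv_nz[OF assms])
  show "det2 (mv A (rep (slope v))) (mv A v) = 0" by (simp add: det2_mv det2_rep_slope[OF assms(2)])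
qed

lemma detm_unit: "\<bar>detm A\<bar> = 1 \<Longrightarrow> detm A * detm A = 1"
  using abs_mult_self_eq[of "detm A"] by simp

lemma mv_inv: "\<bar>detm A\<bar> = 1 \<Longrightarrow> mv (invm A) (mv A v) = v"
proof -
  assume h: "\<bar>detm A\<bar> = 1"
  have "mv (invm A) (mv A v) = (detm A * detm A * fst v, detm A * detm A * snd v)"
    by (cases A) (simp add: mv_def invm_def detm_def algebra_simps)
  then show ?thesis using detm_unit[OF h] by simp
qed

lemma detm_inv: "\<bar>detm A\<bar> = 1 \<Longrightarrow> \<bar>detm (invm A)\<bar> = 1"
proof -
  assume h: "\<bar>detm A\<bar> = 1"
  obtain a b c d where A: "A = (a,b,c,d)" by (cases A) auto
  have "detm (invm A) = detm A * detm A * detm A"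
    using A by (simp add: invm_def detm_def algebra_simps)
  then show ?thesis using h by (simp add: abs_mult)
qed

lemma inv_inv_mv: "\<bar>detm A\<bar> = 1 \<Longrightarrow> mv A (mv (invm A) v) = v"
proof -
  assume h: "\<bar>detm A\<bar> = 1"
  have "mv A (mv (invm A) v) = (detm A * detm A * fst v, detm A * detm A * snd v)"
    by (cases A) (simp add: mv_def invm_def detm_def algebra_simps)
  then show ?thesis using detm_unit[OF h] by simp
qed

lemma act_inv: "\<bar>detm A\<bar> = 1 \<Longrightarrow> act (invm A) (act A r) = r"
proof -
  assume h: "\<bar>detm A\<bar> = 1"
  have "act (invm A) (act A r) = slope (mv (invm A) (mv A (rep r)))"
    unfolding act_def[of A] using detm_inv[OF h] mv_nz[of A "rep r"] h rep_nz
    by (subst act_slope) auto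
  then show ?thesis using mv_inv[OF h] by simp
qed

lemma inv_act: "\<bar>detm A\<bar> = 1 \<Longrightarrow> act A (act (invm A) r) = r"
proof -
  assume h: "\<bar>detm A\<bar> = 1"
  have "act A (act (invm A) r) = slope (mv A (mv (invm A) (rep r)))"
    unfolding act_def[of "invm A"] using detm_inv[OF h] mv_nz[of "invm A" "rep r"] h rep_nz
    by (subst act_slope) auto
  then show ?thesis using inv_inv_mv[OF h] by simp
qed

lemma act_inj: "\<bar>detm A\<bar> = 1 \<Longrightarrow> inj (act A)"
  by (metis act_inv injI)

lemma scale_act:
  assumes "\<bar>detm A\<bar> = 1"
  shows "\<exists>l::rat. l \<noteq> 0 \<and> of_int (fst (mv A (rep r))) = l * of_int (fst (rep (act A r)))
                        \<and> of_int (snd (mv A (rep r))) = l * of_int (snd (rep (act A r)))"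
  unfolding act_def by (rule rep_slope, rule mv_nz) (use assms rep_nz in auto)

lemma dt_pair:
  assumes "of_int (fst (mv A (rep r))) = l * of_int (fst (rep (act A r)))"
      "of_int (snd (mv A (rep r))) = l * of_int (snd (rep (act A r)))"
      "of_int (fst (mv A (rep s))) = k * of_int (fst (rep (act A s)))"
      "of_int (snd (mv A (rep s))) = k * of_int (snd (rep (act A s)))"
  shows "(of_int (detm A) :: rat) * of_int (det2 (rep r) (rep s)) = l * k * of_int (det2 (rep (act A r)) (rep (act A s)))"
proof -
  have "(of_int (det2 (mv A (rep r)) (mv A (rep s))) :: rat) = l * k * of_int (det2 (rep (act A r)) (rep (act A s)))"
    by (rule det2_scale[OF assms])
  then show ?thesis by (simp add: det2_mv)
qed

lemma linked_act:
  assumes h: "\<bar>detm A\<bar> = 1"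
  shows "linked (act A x) (act A y) (act A u) (act A v) \<longleftrightarrow> linked x y u v"
proof -
  let ?D = "\<lambda>r s. (of_int (det2 (rep r) (rep s)) :: rat)"
  let ?e = "(of_int (detm A) :: rat)"
  have e2: "?e * ?e = 1" using detm_unit[OF h] by (metis of_int_1 of_int_mult)
  have e4: "?e * ?e * ?e * ?e = 1" using e2 by (metis mult_1_left mult.assoc)
  obtain lx :: rat where lx: "lx \<noteq> 0" "of_int (fst (mv A (rep x))) = lx * of_int (fst (rep (act A x)))"
      "of_int (snd (mv A (rep x))) = lx * of_int (snd (rep (act A x)))" using scale_act[OF h] by blast
  obtain ly :: rat where ly: "ly \<noteq> 0" "of_int (fst (mv A (rep y))) = ly * of_int (fst (rep (act A y)))"
      "of_int (snd (mv A (rep y))) = ly * of_int (snd (rep (act A y)))" using scale_act[OF h] by blast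
  obtain lu :: rat where lu: "lu \<noteq> 0" "of_int (fst (mv A (rep u))) = lu * of_int (fst (rep (act A u)))"
      "of_int (snd (mv A (rep u))) = lu * of_int (snd (rep (act A u)))" using scale_act[OF h] by blast
  obtain lv :: rat where lv: "lv \<noteq> 0" "of_int (fst (mv A (rep v))) = lv * of_int (fst (rep (act A v)))"
      "of_int (snd (mv A (rep v))) = lv * of_int (snd (rep (act A v)))" using scale_act[OF h] by blast
  have d1: "?e * ?D x u = lx * lu * ?D (act A x) (act A u)" by (rule dt_pair[OF lx(2,3) lu(2,3)])
  have d2: "?e * ?D y v = ly * lv * ?D (act A y) (act A v)" by (rule dt_pair[OF ly(2,3) lv(2,3)])
  have d3: "?e * ?D x v = lx * lv * ?D (act A x) (act A v)" by (rule dt_pair[OF lx(2,3) lv(2,3)])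
  have d4: "?e * ?D y u = ly * lu * ?D (act A y) (act A u)" by (rule dt_pair[OF ly(2,3) lu(2,3)])
  let ?P = "?D x u * ?D y v * ?D x v * ?D y u"
  let ?P' = "?D (act A x) (act A u) * ?D (act A y) (act A v) * ?D (act A x) (act A v) * ?D (act A y) (act A u)"
  have "?P = (?e * ?e * ?e * ?e) * ?P" using e4 by simp
  also have "\<dots> = (?e * ?D x u) * (?e * ?D y v) * (?e * ?D x v) * (?e * ?D y u)" by (simp add: mult_ac)
  also have "\<dots> = (lx * ly * lu * lv)^2 * ?P'" unfolding d1 d2 d3 d4 by (simp add: power2_eq_square mult_ac)
  finally have eq: "?P = (lx * ly * lu * lv)^2 * ?P'" .
  have pos: "(lx * ly * lu * lv)^2 > 0" using lx ly lu lv by simp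
  have "?P < 0 \<longleftrightarrow> ?P' < 0" unfolding eq using mult_less_cancel_left_pos[OF pos, of ?P' 0] by simp
  moreover have "?P < 0 \<longleftrightarrow> linked x y u v" unfolding linked_det by (simp only: of_int_mult[symmetric] of_int_less_0_iff)
  moreover have "?P' < 0 \<longleftrightarrow> linked (act A x) (act A y) (act A u) (act A v)" unfolding linked_det by (simp only: of_int_mult[symmetric] of_int_less_0_iff)
  ultimately show ?thesis by simp
qed



definition Dset :: "rat option \<Rightarrow> rat option \<Rightarrow> rat option set set" where
  "Dset r1 r2 = {L \<in> farey_lines. \<exists>x y. L = {x,y} \<and> linked x y r1 r2}"

lemma farey_lines_iff: "L \<in> farey_lines \<longleftrightarrow> (\<exists>u v. L = {slope u, slope v} \<and> \<bar>det2 u v\<bar> = 1)"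
proof
  assume "L \<in> farey_lines"
  then obtain m n m' n' where "L = {slope (m, n), slope (m', n')}" "\<bar>m * n' - n * m'\<bar> = 1"
    unfolding farey_lines_def by blast
  then show "\<exists>u v. L = {slope u, slope v} \<and> \<bar>det2 u v\<bar> = 1"
    by (intro exI[of _ "(m,n)"] exI[of _ "(m',n')"]) (simp add: det2_def)
next
  assume "\<exists>u v. L = {slope u, slope v} \<and> \<bar>det2 u v\<bar> = 1"
  then obtain u v where uv: "L = {slope u, slope v}" "\<bar>det2 u v\<bar> = 1" by blast
  obtain m n where u: "u = (m,n)" by force
  obtain m' n' where v: "v = (m',n')" by force
  have "L = {slope (m, n), slope (m', n')} \<and> \<bar>m * n' - n * m'\<bar> = 1" using uv u v by (simp add: det2_def)
  then show "L \<in> farey_lines" unfolding farey_lines_def by blast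
qed

lemma dd_self [simp]: "dd r r = 0"
  by (cases r) simp_all

lemma linked_distinct: "linked x y u v \<Longrightarrow> x \<noteq> u \<and> x \<noteq> v \<and> y \<noteq> u \<and> y \<noteq> v"
  unfolding linked_def by auto

lemma farey_two: "L \<in> farey_lines \<Longrightarrow> L = {x,y} \<Longrightarrow> x \<noteq> y"
proof -
  assume "L \<in> farey_lines" "L = {x,y}"
  then obtain u v where uv: "L = {slope u, slope v}" "\<bar>det2 u v\<bar> = 1" unfolding farey_lines_iff by blast
  have "u \<noteq> (0,0)" "v \<noteq> (0,0)" using uv(2) by (auto simp: det2_def)
  moreover have "det2 u v \<noteq> 0" using uv(2) by auto
  ultimately have "slope u \<noteq> slope v" by (rule slope_neq)
  show "x \<noteq> y"
  proof
    assume "x = y"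
    then have "{slope u, slope v} = {x}" using uv(1) \<open>L = {x,y}\<close> by simp
    then show False using \<open>slope u \<noteq> slope v\<close> by (metis insert_iff singletonD)
  qed
qed

lemma farey_act: assumes "\<bar>detm A\<bar> = 1" "L \<in> farey_lines" shows "act A ` L \<in> farey_lines"
proof -
  obtain u v where uv: "L = {slope u, slope v}" "\<bar>det2 u v\<bar> = 1" using assms(2) unfolding farey_lines_iff by blast
  have "u \<noteq> (0,0)" "v \<noteq> (0,0)" using uv(2) by (auto simp: det2_def)
  have dA: "detm A \<noteq> 0" using assms(1) by auto
  have "act A ` L = {slope (mv A u), slope (mv A v)}"
    using uv(1) act_slope[OF dA \<open>u \<noteq> (0,0)\<close>] act_slope[OF dA \<open>v \<noteq> (0,0)\<close>] by simp
  moreover have "\<bar>det2 (mv A u) (mv A v)\<bar> = 1" using assms(1) uv(2) by (simp add: det2_mv abs_mult)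
  ultimately show ?thesis unfolding farey_lines_iff by blast
qed

lemma Dset_act_sub: assumes "\<bar>detm A\<bar> = 1"
  shows "(\<lambda>L. act A ` L) ` Dset r1 r2 \<subseteq> Dset (act A r1) (act A r2)"
proof
  fix L' assume "L' \<in> (\<lambda>L. act A ` L) ` Dset r1 r2"
  then obtain L x y where L: "L' = act A ` L" "L \<in> farey_lines" "L = {x,y}" "linked x y r1 r2"
    unfolding Dset_def by blast
  have "L' \<in> farey_lines" using farey_act[OF assms L(2)] L(1) by simp
  moreover have "L' = {act A x, act A y}" using L by simp
  moreover have "linked (act A x) (act A y) (act A r1) (act A r2)" using linked_act[OF assms] L(4) by simp
  ultimately show "L' \<in> Dset (act A r1) (act A r2)" unfolding Dset_def by blast
qed

lemma Dset_act: assumes h: "\<bar>detm A\<bar> = 1"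
  shows "Dset (act A r1) (act A r2) = (\<lambda>L. act A ` L) ` Dset r1 r2"
proof
  show "(\<lambda>L. act A ` L) ` Dset r1 r2 \<subseteq> Dset (act A r1) (act A r2)" by (rule Dset_act_sub[OF h])
next
  show "Dset (act A r1) (act A r2) \<subseteq> (\<lambda>L. act A ` L) ` Dset r1 r2"
  proof
    fix L' assume L': "L' \<in> Dset (act A r1) (act A r2)"
    have hi: "\<bar>detm (invm A)\<bar> = 1" by (rule detm_inv[OF h])
    have "act (invm A) ` L' \<in> Dset (act (invm A) (act A r1)) (act (invm A) (act A r2))"
      using Dset_act_sub[OF hi] L' by blast
    then have "act (invm A) ` L' \<in> Dset r1 r2" using act_inv[OF h] by simp
    moreover have "L' = act A ` (act (invm A) ` L')"
      using inv_act[OF h] by (simp add: image_image)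
    ultimately show "L' \<in> (\<lambda>L. act A ` L) ` Dset r1 r2" by blast
  qed
qed

lemma card_Dset_act: assumes h: "\<bar>detm A\<bar> = 1"
  shows "card (Dset (act A r1) (act A r2)) = card (Dset r1 r2)"
    and "finite (Dset (act A r1) (act A r2)) = finite (Dset r1 r2)"
proof -
  have "inj (act A)" by (rule act_inj[OF h])
  then have inj: "inj_on (\<lambda>L. act A ` L) (Dset r1 r2)"
    by (meson inj_image_eq_iff inj_onI)
  show "card (Dset (act A r1) (act A r2)) = card (Dset r1 r2)"
    unfolding Dset_act[OF h] by (rule card_image[OF inj])
  show "finite (Dset (act A r1) (act A r2)) = finite (Dset r1 r2)"
    unfolding Dset_act[OF h] by (rule finite_image_iff[OF inj])
qed

lemma dc_Dset: assumes "r1 \<noteq> r2" shows "d_c r1 r2 = card (Dset r1 r2)"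
proof -
  have "{L \<in> farey_lines. L \<noteq> {r1, r2} \<and> (\<exists>x y. L = {x, y} \<and> geodesic x y \<inter> geodesic r1 r2 \<noteq> {})}
        = Dset r1 r2"
  proof (intro set_eqI iffI)
    fix L assume "L \<in> {L \<in> farey_lines. L \<noteq> {r1, r2} \<and> (\<exists>x y. L = {x, y} \<and> geodesic x y \<inter> geodesic r1 r2 \<noteq> {})}"
    then obtain x y where L: "L \<in> farey_lines" "L \<noteq> {r1,r2}" "L = {x,y}" "geodesic x y \<inter> geodesic r1 r2 \<noteq> {}" by blast
    have "x \<noteq> y" by (rule farey_two[OF L(1,3)])
    then have "linked x y r1 r2" using geo_iff[OF \<open>x \<noteq> y\<close> assms] L by simp
    then show "L \<in> Dset r1 r2" unfolding Dset_def using L by blast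
  next
    fix L assume "L \<in> Dset r1 r2"
    then obtain x y where L: "L \<in> farey_lines" "L = {x,y}" "linked x y r1 r2" unfolding Dset_def by blast
    have "x \<noteq> y" by (rule farey_two[OF L(1,2)])
    have "L \<noteq> {r1,r2}" using linked_distinct[OF L(3)] L(2) by auto
    moreover have "geodesic x y \<inter> geodesic r1 r2 \<noteq> {}" using geo_iff[OF \<open>x \<noteq> y\<close> assms] L by simp
    ultimately show "L \<in> {L \<in> farey_lines. L \<noteq> {r1, r2} \<and> (\<exists>x y. L = {x, y} \<and> geodesic x y \<inter> geodesic r1 r2 \<noteq> {})}"
      using L by blast
  qed
  then show ?thesis unfolding d_c_def by simp
qed



lemma slope_norm:
  assumes "n \<noteq> 0"
  shows "slope (m,n) = Some (of_int (sgn n * m) / of_int \<bar>n\<bar>)"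
proof -
  have "(of_int m :: rat) / of_int n = of_int (sgn n * m) / of_int \<bar>n\<bar>"
    using assms by (cases "n > 0") (simp_all add: field_simps)
  then show ?thesis using assms by (simp add: slope_def)
qed

lemma slope_zero_den: "slope (m,0) = None" by (simp add: slope_def)

lemma farey_cases:
  assumes "L \<in> farey_lines"
  shows "(\<exists>k::int. L = {None, Some (of_int k)}) \<or>
         (\<exists>m n m' n'. 0 < n \<and> 0 < n' \<and> m' * n - m * n' = 1 \<and>
             L = {Some (of_int m / of_int n), Some (of_int m' / of_int n')})"
proof -
  obtain u v where uv: "L = {slope u, slope v}" "\<bar>det2 u v\<bar> = 1" using assms unfolding farey_lines_iff by blast
  obtain m n where u: "u = (m,n)" by force
  obtain m' n' where v: "v = (m',n')" by force
  have d: "\<bar>m * n' - n * m'\<bar> = 1" using uv(2) u v by (simp add: det2_def)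
  show ?thesis
  proof (cases "n = 0")
    case True
    then have "\<bar>n' * m\<bar> = 1" using d by (simp add: mult.commute)
    then have n1: "\<bar>n'\<bar> = 1" by (rule abs_zmult_eq_1)
    then have "n' = 1 \<or> n' = -1" by auto
    then have "slope v = Some (of_int (m' * n'))" using v by (auto simp: slope_def)
    moreover have "slope u = None" using u True by (simp add: slope_def)
    ultimately have "L = {None, Some (of_int (m' * n'))}" using uv(1) by simp
    then show ?thesis by blast
  next
    case False
    show ?thesis
    proof (cases "n' = 0")
      case True
      then have "\<bar>n * m'\<bar> = 1" using d by simp
      then have n1: "\<bar>n\<bar> = 1" by (rule abs_zmult_eq_1)
      then have "n = 1 \<or> n = -1" by auto
      then have "slope u = Some (of_int (m * n))" using u by (auto simp: slope_def)
      moreover have "slope v = None" using v True by (simp add: slope_def)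
      ultimately have "L = {None, Some (of_int (m * n))}" using uv(1) by (simp add: insert_commute)
      then show ?thesis by blast
    next
      case False2: False
      define M where "M = sgn n * m"
      define N where "N = \<bar>n\<bar>"
      define M' where "M' = sgn n' * m'"
      define N' where "N' = \<bar>n'\<bar>"
      have su: "slope u = Some (of_int M / of_int N)" using slope_norm[OF False] u M_def N_def by simp
      have sv: "slope v = Some (of_int M' / of_int N')" using slope_norm[OF False2] v M'_def N'_def by simp
      have pos: "N > 0" "N' > 0" using False False2 N_def N'_def by auto
      have "M' * N - M * N' = sgn n * sgn n' * (n * m' - m * n')"
        unfolding M_def N_def M'_def N'_def by (simp add: abs_sgn algebra_simps)
      then have "\<bar>M' * N - M * N'\<bar> = 1" using d False False2 by (simp add: abs_mult abs_sgn_eq abs_minus_commute)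
      then have "M' * N - M * N' = 1 \<or> M * N' - M' * N = 1" by linarith
      then show ?thesis
      proof
        assume "M' * N - M * N' = 1"
        moreover have "L = {Some (of_int M / of_int N), Some (of_int M' / of_int N')}" using su sv uv(1) by simp
        ultimately show ?thesis using pos by blast
      next
        assume "M * N' - M' * N = 1"
        moreover have "L = {Some (of_int M' / of_int N'), Some (of_int M / of_int N)}" using su sv uv(1) by auto
        ultimately show ?thesis using pos by blast
      qed
    qed
  qed
qed

lemma frac_less: "0 < n \<Longrightarrow> 0 < N \<Longrightarrow> ((of_int m / of_int n :: rat) < of_int M / of_int N) \<longleftrightarrow> m * N < M * n"
proof -
  assume "0 < n" "0 < N"
  then have "((of_int m / of_int n :: rat) < of_int M / of_int N) \<longleftrightarrow> (of_int m * of_int N :: rat) < of_int M * of_int n"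
    by (simp add: field_simps)
  also have "\<dots> \<longleftrightarrow> m * N < M * n" by (metis of_int_less_iff of_int_mult)
  finally show ?thesis .
qed

lemma farey_between:
  assumes "0 < n" "0 < n'" "m' * n - m * n' = 1"
    and "of_int m / of_int n < z" "z < of_int m' / of_int n'"
  shows "snd (quotient_of z) \<ge> 2"
proof -
  obtain M N where q: "quotient_of z = (M,N)" by force
  have N: "N > 0" using quotient_of_denom_pos[OF q] .
  have z: "z = of_int M / of_int N" using quotient_of_div[OF q] .
  have a: "m * N < M * n" using assms(4) z frac_less[OF assms(1) N] by simp
  have b: "M * n' < m' * N" using assms(5) z frac_less[OF N assms(2)] by simp
  have "n' * (M * n - m * N) + n * (m' * N - M * n') = N * (m' * n - m * n')" by (simp add: algebra_simps)
  then have e: "n' * (M * n - m * N) + n * (m' * N - M * n') = N" using assms(3) by simp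
  have "n' * (M * n - m * N) \<ge> n'" using a assms(2) by simp
  moreover have "n * (m' * N - M * n') \<ge> n" using b assms(1) by simp
  ultimately have "N \<ge> n + n'" using e by linarith
  then show ?thesis using q assms(1,2) by simp
qed

lemma farey_lt:
  assumes "0 < n" "0 < n'" "m' * n - m * n' = 1"
  shows "(of_int m / of_int n :: rat) < of_int m' / of_int n'"
  using frac_less[OF assms(1,2)] assms(3) by simp

lemma farey_int_not_between:
  assumes "0 < n" "0 < n'" "m' * n - m * n' = 1"
    and "of_int m / of_int n < (of_int k :: rat)" "of_int k < (of_int m' / of_int n' :: rat)"
  shows False
  using farey_between[OF assms] by simp

lemma ex_linked: "L = {a,b} \<Longrightarrow> (\<exists>x y. L = {x,y} \<and> linked x y r1 r2) \<longleftrightarrow> linked a b r1 r2"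
  by (metis doubleton_eq_iff linked_swap1)



lemma linked_SS_N: "linked (Some s) (Some t) None (Some x) \<longleftrightarrow> (s - x) * (t - x) < 0"
proof -
  have e: "dd (Some s) None * dd (Some t) (Some x) * dd (Some s) (Some x) * dd (Some t) None = (s - x) * (t - x)"
    by (simp add: algebra_simps)
  show ?thesis unfolding linked_def e ..
qed

lemma linked_SS_0: "linked (Some s) (Some t) (Some 0) (Some x) \<longleftrightarrow> (s * t) * ((s - x) * (t - x)) < 0"
proof -
  have e: "dd (Some s) (Some 0) * dd (Some t) (Some x) * dd (Some s) (Some x) * dd (Some t) (Some 0) = (s * t) * ((s - x) * (t - x))"
    by (simp add: algebra_simps)
  show ?thesis unfolding linked_def e ..
qed

lemma linked_NS_0: "linked None (Some k) (Some 0) (Some x) \<longleftrightarrow> (k - x) * k < 0"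
proof -
  have e: "dd None (Some 0) * dd (Some k) (Some x) * dd None (Some x) * dd (Some k) (Some 0) = (k - x) * k"
    by simp
  show ?thesis unfolding linked_def e ..
qed

lemma betw: "(s::rat) < t \<Longrightarrow> (s - z) * (t - z) < 0 \<Longrightarrow> s < z \<and> z < t"
  by (auto simp: mult_less_0_iff)

lemma Dset_mem: "L \<in> Dset r1 r2 \<longleftrightarrow> L \<in> farey_lines \<and> (\<exists>x y. L = {x,y} \<and> linked x y r1 r2)"
  unfolding Dset_def by simp

lemma Dset_None_0: "Dset None (Some 0) = {}"
proof (rule ccontr)
  assume "Dset None (Some 0) \<noteq> {}"
  then obtain L where L: "L \<in> farey_lines" "\<exists>x y. L = {x,y} \<and> linked x y None (Some 0)"
    unfolding Dset_def by blast
  from farey_cases[OF L(1)] show False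
  proof
    assume "\<exists>k::int. L = {None, Some (of_int k)}"
    then obtain k :: int where Lk: "L = {None, Some (of_int k)}" by blast
    then have "linked None (Some (of_int k)) None (Some 0)" using L(2) ex_linked[OF Lk] by blast
    then show False using linked_distinct by blast
  next
    assume "\<exists>m n m' n'. 0 < n \<and> 0 < n' \<and> m' * n - m * n' = 1 \<and>
             L = {Some (of_int m / of_int n), Some (of_int m' / of_int n')}"
    then obtain m n m' n' where F: "0 < n" "0 < n'" "m' * n - m * n' = 1"
        and LL: "L = {Some (of_int m / of_int n), Some (of_int m' / of_int n')}" by blast
    have lt: "(of_int m / of_int n :: rat) < of_int m' / of_int n'" by (rule farey_lt[OF F])
    have "linked (Some (of_int m / of_int n)) (Some (of_int m' / of_int n')) None (Some 0)"
      using L(2) ex_linked[OF LL] by blast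
    then have "(of_int m / of_int n - 0) * (of_int m' / of_int n' - 0) < (0::rat)" unfolding linked_SS_N .
    then have "(of_int m / of_int n :: rat) < 0 \<and> 0 < (of_int m' / of_int n' :: rat)"
      by (rule betw[OF lt])
    then have "(of_int m / of_int n :: rat) < of_int 0" "of_int 0 < (of_int m' / of_int n' :: rat)" by simp_all
    then show False using farey_int_not_between[OF F] by blast
  qed
qed

definition Aset :: "rat \<Rightarrow> rat option set set" where
  "Aset x = (\<lambda>k::int. {Some 0, Some (1 / of_int k)}) ` {k. 1 \<le> k \<and> of_int k * x < 1}"

lemma Dset_split:
  assumes x0: "0 < x" and x1: "x < 1"
  shows "Dset None (Some x) = Aset x \<union> Dset (Some 0) (Some x)"
proof (intro set_eqI iffI)
  fix L assume "L \<in> Dset None (Some x)"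
  then have L: "L \<in> farey_lines" "\<exists>a b. L = {a,b} \<and> linked a b None (Some x)" unfolding Dset_def by auto
  from farey_cases[OF L(1)] show "L \<in> Aset x \<union> Dset (Some 0) (Some x)"
  proof
    assume "\<exists>k::int. L = {None, Some (of_int k)}"
    then obtain k :: int where Lk: "L = {None, Some (of_int k)}" by blast
    then have "linked None (Some (of_int k)) None (Some x)" using L(2) ex_linked[OF Lk] by blast
    then show ?thesis using linked_distinct by blast
  next
    assume "\<exists>m n m' n'. 0 < n \<and> 0 < n' \<and> m' * n - m * n' = 1 \<and>
             L = {Some (of_int m / of_int n), Some (of_int m' / of_int n')}"
    then obtain m n m' n' where F: "0 < n" "0 < n'" "m' * n - m * n' = 1"
        and LL: "L = {Some (of_int m / of_int n), Some (of_int m' / of_int n')}" by blast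
    define s where "s = (of_int m / of_int n :: rat)"
    define t where "t = (of_int m' / of_int n' :: rat)"
    have lt: "s < t" unfolding s_def t_def by (rule farey_lt[OF F])
    have "linked (Some s) (Some t) None (Some x)"
      using L(2) ex_linked[OF LL] unfolding s_def t_def by blast
    then have "(s - x) * (t - x) < 0" unfolding linked_SS_N .
    then have sx: "s < x" "x < t" using betw[OF lt] by blast+
    have nb: "\<not> (s < of_int j \<and> of_int j < t)" for j
      using farey_int_not_between[OF F] unfolding s_def t_def by blast
    have s0: "s \<ge> 0" using nb[of 0] sx x0 by auto
    have t1: "t \<le> 1" using nb[of 1] sx x1 by auto
    show ?thesis
    proof (cases "s = 0")
      case True
      then have "m = 0" using F(1) unfolding s_def by simp
      then have "m' * n = 1" using F(3) by simp
      then have "n * m' = 1" by (simp add: mult.commute)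
      then have "n = 1" "m' = 1" using pos_zmult_eq_1_iff[OF F(1)] by simp_all
      then have tt: "t = 1 / of_int n'" unfolding t_def by simp
      have "of_int n' * x < 1" using sx(2) tt F(2) by (simp add: field_simps)
      moreover have "L = {Some 0, Some (1 / of_int n')}" using LL True tt unfolding s_def t_def by simp
      ultimately have "L \<in> Aset x" unfolding Aset_def using F(2) by auto
      then show ?thesis by blast
    next
      case False
      then have "s > 0" using s0 by simp
      then have "s * t > 0" using lt by simp
      moreover have "(s - x) * (t - x) < 0" by fact
      ultimately have "(s * t) * ((s - x) * (t - x)) < 0" by (simp add: mult_pos_neg)
      then have "linked (Some s) (Some t) (Some 0) (Some x)" unfolding linked_SS_0 .
      then have "L \<in> Dset (Some 0) (Some x)" unfolding Dset_def using L(1) LL s_def t_def by blast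
      then show ?thesis by blast
    qed
  qed
next
  fix L assume "L \<in> Aset x \<union> Dset (Some 0) (Some x)"
  then show "L \<in> Dset None (Some x)"
  proof
    assume "L \<in> Aset x"
    then obtain k :: int where k: "1 \<le> k" "of_int k * x < 1" and Lk: "L = {Some 0, Some (1 / of_int k)}"
      unfolding Aset_def by blast
    have "slope (0, 1) = Some 0" by (simp add: slope_def)
    moreover have "slope (1, k) = Some (1 / of_int k)" using k by (simp add: slope_def)
    moreover have "\<bar>det2 (0,1) (1,k)\<bar> = 1" by (simp add: det2_def)
    ultimately have "L \<in> farey_lines" unfolding farey_lines_iff Lk by metis
    moreover have "x < 1 / of_int k" using k by (simp add: field_simps)
    then have "(0 - x) * (1 / of_int k - x) < 0" using x0 by (simp add: mult_neg_pos)
    then have "linked (Some 0) (Some (1 / of_int k)) None (Some x)" unfolding linked_SS_N .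
    ultimately show ?thesis unfolding Dset_def Lk by blast
  next
    assume "L \<in> Dset (Some 0) (Some x)"
    then have L: "L \<in> farey_lines" "\<exists>a b. L = {a,b} \<and> linked a b (Some 0) (Some x)" unfolding Dset_def by auto
    from farey_cases[OF L(1)] show ?thesis
    proof
      assume "\<exists>k::int. L = {None, Some (of_int k)}"
      then obtain k :: int where Lk: "L = {None, Some (of_int k)}" by blast
      then have "linked None (Some (of_int k)) (Some 0) (Some x)" using L(2) ex_linked[OF Lk] by blast
      then have "(of_int k - x) * of_int k < 0" unfolding linked_NS_0 .
      then have neg: "(of_int k - x) * of_int k < (0::rat)" .
      have "k \<ge> 1 \<or> k \<le> -1 \<or> k = 0" by linarith
      then show ?thesis
      proof (elim disjE)
        assume "k \<ge> 1"
        then have "(of_int k :: rat) \<ge> 1" by simp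
        then have "(of_int k - x) * of_int k > (0::rat)" using x1 by (intro mult_pos_pos) auto
        then show ?thesis using neg by simp
      next
        assume "k \<le> -1"
        then have "(of_int k :: rat) \<le> -1" by simp
        then have "(of_int k - x) * of_int k > (0::rat)" using x0 by (intro mult_neg_neg) auto
        then show ?thesis using neg by simp
      next
        assume "k = 0"
        then show ?thesis using neg by simp
      qed
    next
      assume "\<exists>m n m' n'. 0 < n \<and> 0 < n' \<and> m' * n - m * n' = 1 \<and>
               L = {Some (of_int m / of_int n), Some (of_int m' / of_int n')}"
      then obtain m n m' n' where F: "0 < n" "0 < n'" "m' * n - m * n' = 1"
          and LL: "L = {Some (of_int m / of_int n), Some (of_int m' / of_int n')}" by blast
      define s where "s = (of_int m / of_int n :: rat)"
      define t where "t = (of_int m' / of_int n' :: rat)"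
      have lt: "s < t" unfolding s_def t_def by (rule farey_lt[OF F])
      have "linked (Some s) (Some t) (Some 0) (Some x)"
        using L(2) ex_linked[OF LL] unfolding s_def t_def by blast
      then have P: "(s * t) * ((s - x) * (t - x)) < 0" unfolding linked_SS_0 .
      have nb: "\<not> (s < of_int j \<and> of_int j < t)" for j
        using farey_int_not_between[OF F] unfolding s_def t_def by blast
      have "\<not> (s * t < 0)"
      proof
        assume "s * t < 0"
        then have "s < 0 \<and> 0 < t" using lt by (auto simp: mult_less_0_iff)
        then show False using nb[of 0] by simp
      qed
      then have "(s - x) * (t - x) < 0" using P by (auto simp: mult_less_0_iff)
      then have "linked (Some s) (Some t) None (Some x)" unfolding linked_SS_N .
      then show ?thesis unfolding Dset_def using L(1) LL s_def t_def by blast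
    qed
  qed
qed

lemma Aset_disj: "Aset x \<inter> Dset (Some 0) (Some x) = {}"
proof -
  have "Some 0 \<notin> L" if "L \<in> Dset (Some 0) (Some x)" for L
    using that unfolding Dset_def by (auto dest: linked_distinct)
  moreover have "Some 0 \<in> L" if "L \<in> Aset x" for L using that unfolding Aset_def by auto
  ultimately show ?thesis by blast
qed

lemma Aset_card:
  shows "card (Aset x) = card {k::int. 1 \<le> k \<and> of_int k * x < 1}"
    and "finite (Aset x) \<longleftrightarrow> finite {k::int. 1 \<le> k \<and> of_int k * x < 1}"
proof -
  have inj: "inj_on (\<lambda>k::int. {Some 0, Some (1 / (of_int k :: rat))}) {k. 1 \<le> k \<and> of_int k * x < 1}"
  proof -
    have key: "k = k'" if "k \<ge> 1" "k' \<ge> 1" "{Some 0, Some (1 / (of_int k::rat))} = {Some 0, Some (1 / of_int k')}" for k k' :: int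
    proof -
      have "(1 / of_int k :: rat) \<noteq> 0" "(1 / of_int k' :: rat) \<noteq> 0" using that by auto
      then have "(1 / of_int k :: rat) = 1 / of_int k'" using that(3) by (auto simp: doubleton_eq_iff)
      then show "k = k'" by simp
    qed
    show ?thesis by (rule inj_onI) (rule key, simp_all)
  qed
  show "card (Aset x) = card {k::int. 1 \<le> k \<and> of_int k * x < 1}"
    unfolding Aset_def by (rule card_image[OF inj])
  show "finite (Aset x) \<longleftrightarrow> finite {k::int. 1 \<le> k \<and> of_int k * x < 1}"
    unfolding Aset_def by (rule finite_image_iff[OF inj])
qed



definition Tm :: "int \<Rightarrow> mat" where "Tm k = (1, 0, k, 1)"
definition Iv :: mat where "Iv = (0, 1, 1, 0)"

lemma detm_Tm: "\<bar>detm (Tm k)\<bar> = 1" by (simp add: Tm_def detm_def)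
lemma detm_Iv: "\<bar>detm Iv\<bar> = 1" by (simp add: Iv_def detm_def)

lemma act_Tm_None: "act (Tm k) None = None"
  by (simp add: act_def mv_def Tm_def slope_def)

lemma act_Tm_Some: "act (Tm k) (Some y) = Some (y + of_int k)"
proof -
  obtain M N where q: "quotient_of y = (M,N)" by force
  have N: "N > 0" using quotient_of_denom_pos[OF q] .
  have y: "y = of_int M / of_int N" using quotient_of_div[OF q] .
  have "act (Tm k) (Some y) = slope (M + k * N, N)" by (simp add: act_def mv_def Tm_def q)
  also have "\<dots> = Some (of_int (M + k * N) / of_int N)" using N by (simp add: slope_def)
  also have "of_int (M + k * N) / of_int N = y + (of_int k :: rat)" using N y by (simp add: field_simps)
  finally show ?thesis .
qed

lemma act_Iv_0: "act Iv (Some 0) = None"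
  by (simp add: act_def mv_def Iv_def slope_def)

lemma act_Iv_Some: "y \<noteq> 0 \<Longrightarrow> act Iv (Some y) = Some (1 / y)"
proof -
  assume y0: "y \<noteq> 0"
  obtain M N where q: "quotient_of y = (M,N)" by force
  have N: "N > 0" using quotient_of_denom_pos[OF q] .
  have y: "y = of_int M / of_int N" using quotient_of_div[OF q] .
  have M: "M \<noteq> 0" using y y0 by auto
  have "act Iv (Some y) = slope (N, M)" by (simp add: act_def mv_def Iv_def q)
  also have "\<dots> = Some (of_int N / of_int M)" using M by (simp add: slope_def)
  also have "of_int N / of_int M = 1 / y" using N M y by simp
  finally show ?thesis .
qed

lemma es_0: "euclid_sub 0 q = 0" "euclid_sub p 0 = 0"
  by (subst euclid_sub.simps; simp)+

lemma es_ge: "0 < q \<Longrightarrow> q \<le> p \<Longrightarrow> euclid_sub p q = Suc (euclid_sub (p - q) q)"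
  by (subst euclid_sub.simps) simp

lemma es_lt: "0 < p \<Longrightarrow> p < q \<Longrightarrow> euclid_sub p q = Suc (euclid_sub p (q - p))"
  by (subst euclid_sub.simps) simp

declare euclid_sub.simps [simp del]

lemma es_sym: "euclid_sub p q = euclid_sub q p"
proof (induction "p + q" arbitrary: p q rule: less_induct)
  case less
  show ?case
  proof (cases "p = 0 \<or> q = 0")
    case True then show ?thesis by (auto simp: es_0)
  next
    case False
    then have p: "p > 0" and q: "q > 0" by auto
    consider "p = q" | "q < p" | "p < q" by linarith
    then show ?thesis
    proof cases
      case 1 then show ?thesis by simp
    next
      case 2
      have "euclid_sub p q = Suc (euclid_sub (p - q) q)" using es_ge[OF q] 2 by simp
      also have "euclid_sub (p - q) q = euclid_sub q (p - q)" using less[of "p - q" q] q 2 by simp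
      also have "Suc (euclid_sub q (p - q)) = euclid_sub q p" using es_lt[OF q 2] by simp
      finally show ?thesis .
    next
      case 3
      have "euclid_sub p q = Suc (euclid_sub p (q - p))" using es_lt[OF p 3] by simp
      also have "euclid_sub p (q - p) = euclid_sub (q - p) p" using less[of p "q - p"] p 3 by simp
      also have "Suc (euclid_sub (q - p) p) = euclid_sub q p" using es_ge[OF p] 3 by simp
      finally show ?thesis .
    qed
  qed
qed

lemma es_div: "0 < q \<Longrightarrow> euclid_sub p q = p div q + euclid_sub (p mod q) q"
proof (induction p rule: less_induct)
  case (less p)
  show ?case
  proof (cases "q \<le> p")
    case False
    then show ?thesis by simp
  next
    case True
    have "euclid_sub p q = Suc (euclid_sub (p - q) q)" using es_ge[OF less.prems True] .
    also have "euclid_sub (p - q) q = (p - q) div q + euclid_sub ((p - q) mod q) q"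
      using less.IH[of "p - q"] less.prems True by simp
    also have "(p - q) mod q = p mod q" using le_mod_geq[OF True] by simp
    also have "Suc ((p - q) div q + euclid_sub (p mod q) q) = p div q + euclid_sub (p mod q) q"
      using le_div_geq[OF less.prems True] by simp
    finally show ?thesis .
  qed
qed

lemma es_pos: "0 < p \<Longrightarrow> 0 < q \<Longrightarrow> euclid_sub p q \<ge> 1"
  by (cases "q \<le> p") (simp_all add: es_ge es_lt)

lemma frac_nat_less: "0 < p \<Longrightarrow> (of_nat j * (of_nat q / of_nat p) < (1::rat)) \<longleftrightarrow> j * q < p"
proof -
  assume p: "0 < p"
  have "(of_nat j * (of_nat q / of_nat p) < (1::rat)) \<longleftrightarrow> (of_nat j * of_nat q < (of_nat p :: rat))"
    using p by (simp add: field_simps)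
  also have "\<dots> \<longleftrightarrow> j * q < p" by (metis of_nat_less_iff of_nat_mult)
  finally show ?thesis .
qed

lemma kset_eq:
  assumes p: "0 < p" and q: "0 < q"
  shows "{k::int. 1 \<le> k \<and> of_int k * (of_nat q / of_nat p) < (1::rat)} = int ` {1..(p - 1) div q}"
proof (intro set_eqI iffI)
  fix k :: int assume "k \<in> {k::int. 1 \<le> k \<and> of_int k * (of_nat q / of_nat p) < (1::rat)}"
  then have k: "1 \<le> k" "of_int k * (of_nat q / of_nat p) < (1::rat)" by auto
  define j where "j = nat k"
  have kj: "k = int j" using k(1) j_def by simp
  have "of_nat j * (of_nat q / of_nat p) < (1::rat)" using k(2) kj by simp
  then have "j * q < p" using frac_nat_less[OF p] by simp
  then have "j * q \<le> p - 1" by simp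
  then have "j \<le> (p - 1) div q" using less_eq_div_iff_mult_less_eq[OF q] by simp
  moreover have "1 \<le> j" using k(1) kj by simp
  ultimately show "k \<in> int ` {1..(p - 1) div q}" using kj by auto
next
  fix k :: int assume "k \<in> int ` {1..(p - 1) div q}"
  then obtain j where j: "k = int j" "1 \<le> j" "j \<le> (p - 1) div q" by auto
  have "j * q \<le> p - 1" using j(3) less_eq_div_iff_mult_less_eq[OF q] by simp
  then have "j * q < p" using p by simp
  then have "of_nat j * (of_nat q / of_nat p) < (1::rat)" using frac_nat_less[OF p] by simp
  then show "k \<in> {k::int. 1 \<le> k \<and> of_int k * (of_nat q / of_nat p) < (1::rat)}" using j by simp
qed

lemma Aset_qp:
  assumes "0 < p" "0 < q"
  shows "finite (Aset (of_nat q / of_nat p))" "card (Aset (of_nat q / of_nat p)) = (p - 1) div q"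
proof -
  have "inj_on int {1..(p - 1) div q}" by simp
  then have c: "card (int ` {1..(p - 1) div q}) = (p - 1) div q" by (simp add: card_image)
  show "finite (Aset (of_nat q / of_nat p))" using Aset_card(2) kset_eq[OF assms] by simp
  show "card (Aset (of_nat q / of_nat p)) = (p - 1) div q" using Aset_card(1) kset_eq[OF assms] c by simp
qed



lemma es_arith:
  assumes "coprime p q" "0 < q" "q < p"
  shows "euclid_sub p q - 1 = (p - 1) div q + (euclid_sub q (p mod q) - 1)"
proof (cases "q = 1")
  case True
  have "euclid_sub p q = p" using es_div[of q p] True by (simp add: es_0)
  then show ?thesis using True by (simp add: es_0)
next
  case False
  then have q2: "q > 1" using assms(2) by simp
  have r0: "p mod q \<noteq> 0"
  proof
    assume "p mod q = 0"
    then have "q dvd p" by auto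
    then have "q dvd gcd p q" by simp
    then show False using assms(1) q2 by simp
  qed
  have d: "(p - 1) div q = p div q"
  proof -
    have "p = q * (p div q) + p mod q" by simp
    then have "p - 1 = q * (p div q) + (p mod q - 1)" using r0 by linarith
    moreover have "p mod q - 1 < q" using assms(2) by (meson le_less_trans diff_le_self mod_less_divisor)
    ultimately show ?thesis by (metis add.commute div_mult_self2 div_less add_0 assms(2) not_gr0 mult.commute)
  qed
  have "euclid_sub p q = p div q + euclid_sub q (p mod q)" using es_div[OF assms(2)] es_sym by simp
  moreover have "euclid_sub q (p mod q) \<ge> 1" using es_pos r0 assms(2) by simp
  ultimately show ?thesis using d by simp
qed

lemma count:
  "coprime p q \<Longrightarrow> q < p \<Longrightarrow> finite (Dset None (Some (of_nat q / of_nat p))) \<and>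
     card (Dset None (Some (of_nat q / of_nat p))) = euclid_sub p q - 1"
proof (induction p arbitrary: q rule: less_induct)
  case (less p)
  show ?case
  proof (cases "q = 0")
    case True
    then show ?thesis using Dset_None_0 by (simp add: es_0)
  next
    case False
    then have q: "0 < q" by simp
    have p: "0 < p" using less.prems by simp
    define x where "x = (of_nat q / of_nat p :: rat)"
    have x0: "0 < x" using p q by (simp add: x_def)
    have x1: "x < 1" using p less.prems(2) by (simp add: x_def)
    define r where "r = p mod q"
    have IH: "finite (Dset None (Some (of_nat r / of_nat q))) \<and>
        card (Dset None (Some (of_nat r / of_nat q))) = euclid_sub q r - 1"
    proof (rule less.IH)
      show "q < p" by (rule less.prems(2))
      show "coprime q r" using less.prems(1) q unfolding r_def by (simp add: coprime_commute)
      show "r < q" using q unfolding r_def by simp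
    qed
    have inv: "1 / x = of_nat r / of_nat q + of_int (int (p div q))"
    proof -
      have "of_nat p = (of_nat (q * (p div q) + r) :: rat)" unfolding r_def by simp
      then show ?thesis using p q unfolding x_def by (simp add: field_simps)
    qed
    have B: "finite (Dset (Some 0) (Some x)) \<and> card (Dset (Some 0) (Some x)) = euclid_sub q r - 1"
    proof -
      have e1: "Dset (act Iv (Some 0)) (act Iv (Some x)) = Dset None (Some (1 / x))"
        using x0 by (simp add: act_Iv_0 act_Iv_Some)
      have e2: "Dset (act (Tm (int (p div q))) None) (act (Tm (int (p div q))) (Some (of_nat r / of_nat q)))
          = Dset None (Some (1 / x))"
        by (simp add: act_Tm_None act_Tm_Some inv)
      have "card (Dset (Some 0) (Some x)) = card (Dset None (Some (1 / x)))"
        using card_Dset_act(1)[OF detm_Iv, of "Some 0" "Some x", unfolded e1] by simp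
      also have "\<dots> = card (Dset None (Some (of_nat r / of_nat q)))"
        using card_Dset_act(1)[OF detm_Tm, of "int (p div q)" None "Some (of_nat r / of_nat q)", unfolded e2] .
      finally have c: "card (Dset (Some 0) (Some x)) = card (Dset None (Some (of_nat r / of_nat q)))" .
      have "finite (Dset (Some 0) (Some x)) = finite (Dset None (Some (1 / x)))"
        using card_Dset_act(2)[OF detm_Iv, of "Some 0" "Some x", unfolded e1] by simp
      also have "\<dots> = finite (Dset None (Some (of_nat r / of_nat q)))"
        using card_Dset_act(2)[OF detm_Tm, of "int (p div q)" None "Some (of_nat r / of_nat q)", unfolded e2] .
      finally show ?thesis using c IH by simp
    qed
    have A: "finite (Aset x)" "card (Aset x) = (p - 1) div q" using Aset_qp[OF p q] unfolding x_def by simp_all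
    have split: "Dset None (Some x) = Aset x \<union> Dset (Some 0) (Some x)" by (rule Dset_split[OF x0 x1])
    have fin: "finite (Dset None (Some x))" using A B split by simp
    have "card (Dset None (Some x)) = card (Aset x) + card (Dset (Some 0) (Some x))"
      unfolding split by (rule card_Un_disjoint) (use A B Aset_disj in auto)
    also have "\<dots> = (p - 1) div q + (euclid_sub q r - 1)" using A B by simp
    also have "\<dots> = euclid_sub p q - 1" unfolding r_def using es_arith[OF less.prems(1) q less.prems(2)] by simp
    finally show ?thesis using fin unfolding x_def by simp
  qed
qed

theorem theorem17:
  fixes p q :: nat and a b c d :: int
  assumes "0 < q" and "q < p" and "coprime p q"
    and "\<bar>a * d - b * c\<bar> = 1"
  shows "d_c (slope (a, b))
             (slope (int q * a + int p * c, int q * b + int p * d))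
         = euclid_sub p q - 1"
proof -
  define A0 :: mat where "A0 = (a, b, c, d)"
  have hA: "\<bar>detm A0\<bar> = 1" using assms(4) by (simp add: A0_def detm_def)
  have dA: "detm A0 \<noteq> 0" using hA by auto
  define x where "x = (of_nat q / of_nat p :: rat)"
  have p0: "p > 0" using assms by simp
  have s1: "slope (a, b) = act A0 None" by (simp add: act_def mv_def A0_def)
  have sqp: "slope (int q, int p) = Some x" using p0 by (simp add: slope_def x_def)
  have "act A0 (Some x) = slope (mv A0 (int q, int p))"
    using act_slope[OF dA, of "(int q, int p)"] sqp p0 by simp
  also have "\<dots> = slope (int q * a + int p * c, int q * b + int p * d)"
    by (simp add: mv_def A0_def mult.commute)
  finally have s2: "slope (int q * a + int p * c, int q * b + int p * d) = act A0 (Some x)" by simp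
  have ne: "act A0 None \<noteq> act A0 (Some x)" using act_inj[OF hA] by (simp add: inj_eq)
  have "d_c (slope (a, b)) (slope (int q * a + int p * c, int q * b + int p * d))
      = card (Dset (act A0 None) (act A0 (Some x)))" unfolding s1 s2 by (rule dc_Dset[OF ne])
  also have "\<dots> = card (Dset None (Some x))" by (rule card_Dset_act(1)[OF hA])
  also have "\<dots> = euclid_sub p q - 1" using count[OF assms(3) assms(2)] unfolding x_def by simp
  finally show ?thesis .
qed

end
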